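(* Let $(u_S,u_R)$ be an environment satisfying scant-indifferences. If commitment has no value, then there exist a partitional messaging strategy $\hat\sigma$ and a pure action strategy $\hat\rho$ such that $(\hat\sigma,\hat\rho)$ is a cheap-talk equilibrium, $U_S(\hat\sigma,\hat\rho)$ equals the persuasion payoff, and $|M_{\hat\sigma}|\le|A|$.
   Context: $A=\{a_1,\dots,a_{|A|}\}$ and $\Omega$ are finite nonempty sets, $\mu_0$ a prior on $\Omega$ with $\mu_0(\omega)>0$ for all $\omega$, and $M$ a finite message set with $|M|>\max\{|\Omega|,|A|\}$. An environment is a pair of functions $u_S,u_R:A\times\Omega\to[0,1]$. A messaging strategy is $\sigma:\Omega\to\Delta M$; an action strategy is $\rho:M\to\Delta A$; $\rho$ is pure if every $\rho(\cdot|m)$ is degenerate. $U_i(\sigma,\rho)=\sum_{\omega,m,a}\mu_0(\omega)\sigma(m|\omega)\rho(a|m)u_i(a,\omega)$. $(\sigma,\rho)$ is S-BR if $\sigma\in\arg\max_{\sigma'}U_S(\sigma',\rho)$, R-BR if $\rho\in\arg\max_{\rho'}U_R(\sigma,\rho')$; a cheap-talk equilibrium is S-BR and R-BR. The persuasion payoff is the maximum of $U_S$ over R-BR profiles; the cheap-talk payoff is the maximum of $U_S$ over cheap-talk equilibria; commitment has no value if these are equal. $\sigma$ is partitional if for every $\omega$ some $m$ has $\sigma(m|\omega)=1$. $M_\sigma=\{m:\sigma(m|\omega)>0\text{ for some }\omega\}$. Scant-indifferences: for each $a\in A$ let $\mathbf u_S(a)=u_S(a,\cdot)\in\mathbb R^{|\Omega|}$,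 $\mathbf u_R(a)=u_R(a,\cdot)$. For each $i$, the expanded-indifference matrix $T^i$ has $|\Omega|$ columns and rows: $\mathbf u_S(a_j)-\mathbf u_S(a_i)$ for each $j\ne i$, then $\mathbf u_R(a_j)-\mathbf u_R(a_i)$ for each $j\ne i$, then the rows of the $|\Omega|\times|\Omega|$ identity matrix. A row-submatrix of $T^i$ is a matrix obtained by deleting some rows. The environment satisfies scant-indifferences if for every $i$ every row-submatrix of $T^i$ has full rank. *)

theory Defs
  imports "HOL-Analysis.Analysis" "HOL-Probability.Probability"
begin

text \<open>Actions 'a, states 'w, messages 'm (all finite types).
  A messaging strategy is a map 'w \<Rightarrow> 'm pmf, an action strategy a map 'm \<Rightarrow> 'a pmf.\<close>

definition U :: "'w pmf \<Rightarrow> ('a \<Rightarrow> 'w \<Rightarrow> real) \<Rightarrow> ('w::finite \<Rightarrow> 'm::finite pmf)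
                   \<Rightarrow> ('m \<Rightarrow> 'a::finite pmf) \<Rightarrow> real" where
  "U mu0 u \<sigma> \<rho> = (\<Sum>\<omega>\<in>UNIV. \<Sum>m\<in>UNIV. \<Sum>a\<in>UNIV.
       pmf mu0 \<omega> * pmf (\<sigma> \<omega>) m * pmf (\<rho> m) a * u a \<omega>)"

definition S_BR :: "'w pmf \<Rightarrow> ('a \<Rightarrow> 'w \<Rightarrow> real) \<Rightarrow> ('w::finite \<Rightarrow> 'm::finite pmf)
                   \<Rightarrow> ('m \<Rightarrow> 'a::finite pmf) \<Rightarrow> bool" where
  "S_BR mu0 uS \<sigma> \<rho> \<longleftrightarrow> (\<forall>\<sigma>'. U mu0 uS \<sigma>' \<rho> \<le> U mu0 uS \<sigma> \<rho>)"

definition R_BR :: "'w pmf \<Rightarrow> ('a \<Rightarrow> 'w \<Rightarrow> real) \<Rightarrow> ('w::finite \<Rightarrow> 'm::finite pmf)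
                   \<Rightarrow> ('m \<Rightarrow> 'a::finite pmf) \<Rightarrow> bool" where
  "R_BR mu0 uR \<sigma> \<rho> \<longleftrightarrow> (\<forall>\<rho>'. U mu0 uR \<sigma> \<rho>' \<le> U mu0 uR \<sigma> \<rho>)"

definition cheap_talk_eq :: "'w pmf \<Rightarrow> ('a \<Rightarrow> 'w \<Rightarrow> real) \<Rightarrow> ('a \<Rightarrow> 'w \<Rightarrow> real)
      \<Rightarrow> ('w::finite \<Rightarrow> 'm::finite pmf) \<Rightarrow> ('m \<Rightarrow> 'a::finite pmf) \<Rightarrow> bool" where
  "cheap_talk_eq mu0 uS uR \<sigma> \<rho> \<longleftrightarrow> S_BR mu0 uS \<sigma> \<rho> \<and> R_BR mu0 uR \<sigma> \<rho>"

text \<open>Persuasion payoff: maximum (= supremum, attained) of U_S over R-BR profiles;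
  the message type is passed as an itself-parameter.\<close>
definition persuasion_payoff :: "'w::finite pmf \<Rightarrow> ('a::finite \<Rightarrow> 'w \<Rightarrow> real) \<Rightarrow> ('a \<Rightarrow> 'w \<Rightarrow> real)
      \<Rightarrow> 'm::finite itself \<Rightarrow> real" where
  "persuasion_payoff mu0 uS uR (TYPE('m)) =
     Sup {U mu0 uS \<sigma> \<rho> | (\<sigma> :: 'w \<Rightarrow> 'm pmf) (\<rho> :: 'm \<Rightarrow> 'a pmf).
            R_BR mu0 uR \<sigma> \<rho>}"

definition cheap_talk_payoff :: "'w::finite pmf \<Rightarrow> ('a::finite \<Rightarrow> 'w \<Rightarrow> real) \<Rightarrow> ('a \<Rightarrow> 'w \<Rightarrow> real)
      \<Rightarrow> 'm::finite itself \<Rightarrow> real" where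
  "cheap_talk_payoff mu0 uS uR (TYPE('m)) =
     Sup {U mu0 uS \<sigma> \<rho> | (\<sigma> :: 'w \<Rightarrow> 'm pmf) (\<rho> :: 'm \<Rightarrow> 'a pmf).
            cheap_talk_eq mu0 uS uR \<sigma> \<rho>}"

definition partitional :: "('w \<Rightarrow> 'm pmf) \<Rightarrow> bool" where
  "partitional \<sigma> \<longleftrightarrow> (\<forall>\<omega>. \<exists>m. pmf (\<sigma> \<omega>) m = 1)"

definition pure_strategy :: "('m \<Rightarrow> 'a pmf) \<Rightarrow> bool" where
  "pure_strategy \<rho> \<longleftrightarrow> (\<forall>m. \<exists>a. \<rho> m = return_pmf a)"

definition used_messages :: "('w \<Rightarrow> 'm pmf) \<Rightarrow> 'm set" where
  "used_messages \<sigma> = {m. \<exists>\<omega>. pmf (\<sigma> \<omega>) m > 0}"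

text \<open>Row indices of the expanded-indifference matrix T^i.\<close>
datatype ('a, 'w) tidx = SDiff 'a | RDiff 'a | IdRow 'w

definition T_indices :: "'a \<Rightarrow> ('a, 'w) tidx set" where
  "T_indices i = {SDiff j | j. j \<noteq> i} \<union> {RDiff j | j. j \<noteq> i} \<union> range IdRow"

definition T_row :: "('a \<Rightarrow> 'w \<Rightarrow> real) \<Rightarrow> ('a \<Rightarrow> 'w \<Rightarrow> real) \<Rightarrow> 'a
                      \<Rightarrow> ('a, 'w::finite) tidx \<Rightarrow> real ^ 'w" where
  "T_row uS uR i k = (case k of
       SDiff j \<Rightarrow> (\<chi> \<omega>. uS j \<omega> - uS i \<omega>)
     | RDiff j \<Rightarrow> (\<chi> \<omega>. uR j \<omega> - uR i \<omega>)
     | IdRow w \<Rightarrow> (\<chi> \<omega>. if \<omega> = w then 1 else 0))"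

text \<open>Rank of the row-submatrix with row index set I = dimension of its row space;
  full rank means rank = min (number of rows) (number of columns).\<close>
definition scant_indifferences :: "('a \<Rightarrow> 'w \<Rightarrow> real) \<Rightarrow> ('a \<Rightarrow> 'w::finite \<Rightarrow> real) \<Rightarrow> bool" where
  "scant_indifferences uS uR \<longleftrightarrow>
     (\<forall>i I. I \<subseteq> T_indices i \<longrightarrow>
        dim (T_row uS uR i ` I) = min (card I) CARD('w))"

end

theory Submission imports Defs begin

definition wm :: "'w pmf \<Rightarrow> ('w \<Rightarrow> 'm pmf) \<Rightarrow> 'm \<Rightarrow> 'w \<Rightarrow> real" where
  "wm mu0 \<sigma> m \<omega> = pmf mu0 \<omega> * pmf (\<sigma> \<omega>) m"

definition G :: "('a \<Rightarrow> 'w::finite \<Rightarrow> real) \<Rightarrow> ('w \<Rightarrow> real) \<Rightarrow> 'a \<Rightarrow> real" where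
  "G u y a = (\<Sum>\<omega>\<in>UNIV. y \<omega> * u a \<omega>)"

definition obed :: "('a \<Rightarrow> 'w::finite \<Rightarrow> real) \<Rightarrow> ('w \<Rightarrow> real) \<Rightarrow> 'a \<Rightarrow> bool" where
  "obed uR y c \<longleftrightarrow> (\<forall>b. G uR y b \<le> G uR y c)"

definition vv :: "('m \<Rightarrow> 'a::finite pmf) \<Rightarrow> ('a \<Rightarrow> 'w \<Rightarrow> real) \<Rightarrow> 'm \<Rightarrow> 'w \<Rightarrow> real" where
  "vv \<rho> u m \<omega> = (\<Sum>a\<in>UNIV. pmf (\<rho> m) a * u a \<omega>)"

lemma U_alt: "U mu0 u \<sigma> \<rho> = (\<Sum>m\<in>UNIV. \<Sum>a\<in>UNIV. pmf (\<rho> m) a * G u (wm mu0 \<sigma> m) a)"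
proof -
  have "U mu0 u \<sigma> \<rho> = (\<Sum>m\<in>UNIV. \<Sum>\<omega>\<in>UNIV. \<Sum>a\<in>UNIV. pmf mu0 \<omega> * pmf (\<sigma> \<omega>) m * pmf (\<rho> m) a * u a \<omega>)"
    unfolding U_def by (rule sum.swap)
  also have "\<dots> = (\<Sum>m\<in>UNIV. \<Sum>a\<in>UNIV. \<Sum>\<omega>\<in>UNIV. pmf mu0 \<omega> * pmf (\<sigma> \<omega>) m * pmf (\<rho> m) a * u a \<omega>)"
    by (rule sum.cong[OF refl], rule sum.swap)
  also have "\<dots> = (\<Sum>m\<in>UNIV. \<Sum>a\<in>UNIV. pmf (\<rho> m) a * G u (wm mu0 \<sigma> m) a)"
    unfolding G_def wm_def by (simp add: sum_distrib_left mult_ac)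
  finally show ?thesis .
qed

lemma U_alt2: "U mu0 u \<sigma> \<rho> = (\<Sum>\<omega>\<in>UNIV. pmf mu0 \<omega> * (\<Sum>m\<in>UNIV. pmf (\<sigma> \<omega>) m * vv \<rho> u m \<omega>))"
  unfolding U_def vv_def by (simp add: sum_distrib_left mult_ac)

lemma sum_pmf1: "(\<Sum>x\<in>(UNIV::'a::finite set). pmf p x) = 1"
  by (rule sum_pmf_eq_1) auto

lemma avg_max:
  fixes f :: "'a::finite \<Rightarrow> real"
  assumes "\<forall>i\<in>set_pmf p. f i \<le> M" "M \<le> (\<Sum>i\<in>UNIV. pmf p i * f i)" "i \<in> set_pmf p"
  shows "f i = M"
proof -
  have "(\<Sum>i\<in>UNIV. pmf p i * (M - f i)) = M * (\<Sum>i\<in>UNIV. pmf p i) - (\<Sum>i\<in>UNIV. pmf p i * f i)"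
    by (simp add: algebra_simps sum_subtractf sum_distrib_left)
  also have "\<dots> \<le> 0" using assms(2) by (simp add: sum_pmf1)
  finally have le: "(\<Sum>i\<in>UNIV. pmf p i * (M - f i)) \<le> 0" .
  have nn: "\<forall>j\<in>UNIV. 0 \<le> pmf p j * (M - f j)"
  proof
    fix j show "0 \<le> pmf p j * (M - f j)"
    proof (cases "j \<in> set_pmf p")
      case True thus ?thesis using assms(1) by simp
    next
      case False hence "pmf p j = 0" by (simp add: set_pmf_iff)
      thus ?thesis by simp
    qed
  qed
  hence "(\<Sum>i\<in>UNIV. pmf p i * (M - f i)) = 0" using le by (meson antisym sum_nonneg)
  hence "\<forall>j\<in>UNIV. pmf p j * (M - f j) = 0" using nn by (simp add: sum_nonneg_eq_0_iff)
  hence "pmf p i * (M - f i) = 0" by simp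
  moreover have "pmf p i > 0" using assms(3) by (simp add: pmf_positive)
  ultimately show ?thesis by simp
qed

lemma ex_max: "\<exists>x. \<forall>y. f y \<le> (f x :: real)" for f :: "'a::finite \<Rightarrow> real"
proof -
  have "Max (range f) \<in> range f" by (rule Max_in) auto
  then obtain x where "Max (range f) = f x" by (rule rangeE)
  moreover have "\<forall>y. f y \<le> Max (range f)" by simp
  ultimately show ?thesis by metis
qed

lemma sum_upd: "(\<Sum>x\<in>(UNIV::'a::finite set). F x ((g(x0:=q)) x)) = (\<Sum>x\<in>UNIV. F x (g x)) - F x0 (g x0) + F x0 q"
  for F :: "'a::finite \<Rightarrow> 'b \<Rightarrow> real"
proof -
  have "(\<Sum>x\<in>UNIV. F x ((g(x0:=q)) x)) = F x0 ((g(x0:=q)) x0) + (\<Sum>x\<in>UNIV-{x0}. F x ((g(x0:=q)) x))"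
    by (rule sum.remove) auto
  also have "F x0 ((g(x0:=q)) x0) = F x0 q" by simp
  also have "(\<Sum>x\<in>UNIV-{x0}. F x ((g(x0:=q)) x)) = (\<Sum>x\<in>UNIV-{x0}. F x (g x))"
    by (rule sum.cong) auto
  moreover have "(\<Sum>x\<in>UNIV. F x (g x)) = F x0 (g x0) + (\<Sum>x\<in>UNIV-{x0}. F x (g x))"
    by (rule sum.remove) auto
  ultimately show ?thesis by simp
qed

lemma sum_return: "(\<Sum>a\<in>UNIV. pmf (return_pmf c) a * f a) = (f c :: real)" for c :: "'a::finite"
  by (simp add: pmf_return indicator_def)

lemma RBR_local:
  fixes \<sigma> :: "'w::finite \<Rightarrow> 'm::finite pmf" and \<rho> :: "'m \<Rightarrow> 'a::finite pmf"
  assumes R: "R_BR mu0 uR \<sigma> \<rho>" and c: "c \<in> set_pmf (\<rho> m)"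
  shows "obed uR (wm mu0 \<sigma> m) c"
proof -
  let ?g = "G uR (wm mu0 \<sigma> m)"
  obtain as where as: "\<forall>b. ?g b \<le> ?g as" using ex_max by blast
  let ?H = "\<lambda>m' p. (\<Sum>a\<in>UNIV. pmf p a * G uR (wm mu0 \<sigma> m') a)"
  have "U mu0 uR \<sigma> (\<rho>(m := return_pmf as)) = (\<Sum>m'\<in>UNIV. ?H m' ((\<rho>(m := return_pmf as)) m'))"
    by (simp only: U_alt)
  also have "\<dots> = (\<Sum>m'\<in>UNIV. ?H m' (\<rho> m')) - ?H m (\<rho> m) + ?H m (return_pmf as)"
    by (rule sum_upd)
  also have "\<dots> = U mu0 uR \<sigma> \<rho> - ?H m (\<rho> m) + ?g as"
    by (simp only: U_alt sum_return)
  finally have "U mu0 uR \<sigma> (\<rho>(m := return_pmf as)) = U mu0 uR \<sigma> \<rho> - ?H m (\<rho> m) + ?g as" .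
  moreover have "U mu0 uR \<sigma> (\<rho>(m := return_pmf as)) \<le> U mu0 uR \<sigma> \<rho>"
    using R unfolding R_BR_def by blast
  ultimately have "?g as \<le> ?H m (\<rho> m)" by linarith
  hence "?g c = ?g as" using avg_max[of "\<rho> m" ?g "?g as" c] as c by blast
  thus ?thesis unfolding obed_def using as by simp
qed

lemma SBR_local:
  fixes \<sigma> :: "'w::finite \<Rightarrow> 'm::finite pmf" and \<rho> :: "'m \<Rightarrow> 'a::finite pmf"
  assumes S: "S_BR mu0 uS \<sigma> \<rho>" and mu: "pmf mu0 \<omega> > 0" and m: "m \<in> set_pmf (\<sigma> \<omega>)"
  shows "vv \<rho> uS m' \<omega> \<le> vv \<rho> uS m \<omega>"
proof -
  let ?g = "\<lambda>m. vv \<rho> uS m \<omega>"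
  obtain ms where ms: "\<forall>b. ?g b \<le> ?g ms" using ex_max[of ?g] by blast
  let ?H = "\<lambda>\<omega> p. pmf mu0 \<omega> * (\<Sum>m\<in>UNIV. pmf p m * vv \<rho> uS m \<omega>)"
  have "U mu0 uS (\<sigma>(\<omega> := return_pmf ms)) \<rho> = (\<Sum>w\<in>UNIV. ?H w ((\<sigma>(\<omega> := return_pmf ms)) w))"
    by (simp only: U_alt2)
  also have "\<dots> = (\<Sum>w\<in>UNIV. ?H w (\<sigma> w)) - ?H \<omega> (\<sigma> \<omega>) + ?H \<omega> (return_pmf ms)"
    by (rule sum_upd)
  also have "\<dots> = U mu0 uS \<sigma> \<rho> - ?H \<omega> (\<sigma> \<omega>) + pmf mu0 \<omega> * ?g ms"
    by (simp only: U_alt2 sum_return)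
  finally have "U mu0 uS (\<sigma>(\<omega> := return_pmf ms)) \<rho> = U mu0 uS \<sigma> \<rho> - ?H \<omega> (\<sigma> \<omega>) + pmf mu0 \<omega> * ?g ms" .
  moreover have "U mu0 uS (\<sigma>(\<omega> := return_pmf ms)) \<rho> \<le> U mu0 uS \<sigma> \<rho>"
    using S unfolding S_BR_def by blast
  ultimately have "pmf mu0 \<omega> * ?g ms \<le> pmf mu0 \<omega> * (\<Sum>m\<in>UNIV. pmf (\<sigma> \<omega>) m * ?g m)" by linarith
  hence "?g ms \<le> (\<Sum>m\<in>UNIV. pmf (\<sigma> \<omega>) m * ?g m)" using mu by simp
  hence "?g m = ?g ms" using avg_max[of "\<sigma> \<omega>" ?g "?g ms" m] ms m by blast
  thus ?thesis using ms by simp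
qed


lemma pmf_embed_finite:
  fixes f :: "'a::finite \<Rightarrow> real"
  assumes "\<And>x. 0 \<le> f x" "sum f UNIV = 1"
  shows "pmf (embed_pmf f) x = f x"
proof (rule pmf_embed_pmf)
  show "\<And>x. 0 \<le> f x" by fact
  have "(\<integral>\<^sup>+x. ennreal (f x) \<partial>count_space UNIV) = (\<Sum>a\<in>UNIV. ennreal (f a))"
    by (rule nn_integral_count_space_finite) simp
  also have "\<dots> = ennreal (sum f UNIV)" using assms(1) by simp
  finally show "(\<integral>\<^sup>+x. ennreal (f x) \<partial>count_space UNIV) = 1" using assms(2) by simp
qed

lemma G_add: "G u (\<lambda>\<omega>. f \<omega> + g \<omega>) a = G u f a + G u g a"
  unfolding G_def by (simp add: distrib_right sum.distrib)
lemma G_sum: "G u (\<lambda>\<omega>. \<Sum>i\<in>A. f i \<omega>) a = (\<Sum>i\<in>A. G u (f i) a)"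
  unfolding G_def by (simp add: sum_distrib_right) (rule sum.swap)
lemma G_scale: "G u (\<lambda>\<omega>. c * f \<omega>) a = c * G u f a"
  unfolding G_def by (simp add: sum_distrib_left mult_ac)
lemma G_if: "G u (\<lambda>\<omega>. if P then f \<omega> else 0) a = (if P then G u f a else 0)"
  unfolding G_def by simp
lemma G_zero: "G u (\<lambda>\<omega>. 0) a = 0"
  unfolding G_def by simp

lemma realize:
  fixes mu0 :: "'w::finite pmf" and X :: "'a::finite \<Rightarrow> 'w \<Rightarrow> real"
  assumes mu: "\<forall>\<omega>. pmf mu0 \<omega> > 0" and card: "CARD('a) \<le> CARD('m::finite)"
    and nn: "\<forall>a \<omega>. 0 \<le> X a \<omega>" and sm: "\<forall>\<omega>. (\<Sum>a\<in>UNIV. X a \<omega>) = pmf mu0 \<omega>"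
    and ob: "\<forall>c. obed uR (X c) c"
  shows "\<exists>(\<sigma>::'w \<Rightarrow> 'm pmf) \<rho>. R_BR mu0 uR \<sigma> \<rho> \<and> U mu0 uS \<sigma> \<rho> = (\<Sum>c\<in>UNIV. G uS (X c) c)"
proof -
  obtain e :: "'a \<Rightarrow> 'm" where inj: "inj e"
    using card_le_inj[of "UNIV::'a set" "UNIV::'m set"] card by auto
  define P where "P \<omega> = embed_pmf (\<lambda>a. X a \<omega> / pmf mu0 \<omega>)" for \<omega>
  have pmfP: "pmf (P \<omega>) a = X a \<omega> / pmf mu0 \<omega>" for \<omega> a
    unfolding P_def
  proof (rule pmf_embed_finite)
    show "\<And>x. 0 \<le> X x \<omega> / pmf mu0 \<omega>" using nn mu by simp
    have "(\<Sum>x\<in>UNIV. X x \<omega> / pmf mu0 \<omega>) = (\<Sum>x\<in>UNIV. X x \<omega>) / pmf mu0 \<omega>"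
      by (simp add: sum_divide_distrib)
    thus "(\<Sum>x\<in>UNIV. X x \<omega> / pmf mu0 \<omega>) = 1" using sm mu by (metis divide_self less_irrefl)
  qed
  define \<sigma> :: "'w \<Rightarrow> 'm pmf" where "\<sigma> \<omega> = map_pmf e (P \<omega>)" for \<omega>
  define \<rho> :: "'m \<Rightarrow> 'a pmf" where "\<rho> m = return_pmf (inv e m)" for m
  have w_e: "wm mu0 \<sigma> (e a) = X a" for a
  proof
    fix \<omega>
    have "pmf (\<sigma> \<omega>) (e a) = X a \<omega> / pmf mu0 \<omega>" unfolding \<sigma>_def using pmf_map_inj'[OF inj] pmfP by simp
    thus "wm mu0 \<sigma> (e a) \<omega> = X a \<omega>" unfolding wm_def using mu by (metis less_irrefl nonzero_mult_div_cancel_left times_divide_eq_right)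
  qed
  have w_0: "wm mu0 \<sigma> m = (\<lambda>_. 0)" if "m \<notin> range e" for m
  proof
    fix \<omega>
    have "m \<notin> set_pmf (\<sigma> \<omega>)" unfolding \<sigma>_def using that by auto
    hence "pmf (\<sigma> \<omega>) m = 0" by (simp add: set_pmf_iff)
    thus "wm mu0 \<sigma> m \<omega> = 0" unfolding wm_def by simp
  qed
  have Ugen: "U mu0 u \<sigma> \<rho>' = (\<Sum>a\<in>UNIV. \<Sum>b\<in>UNIV. pmf (\<rho>' (e a)) b * G u (X a) b)" for u \<rho>'
  proof -
    let ?F = "\<lambda>m. \<Sum>b\<in>UNIV. pmf (\<rho>' m) b * G u (wm mu0 \<sigma> m) b"
    have "U mu0 u \<sigma> \<rho>' = sum ?F UNIV" by (rule U_alt)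
    also have "\<dots> = sum ?F (range e)"
      by (rule sum.mono_neutral_right) (auto simp: w_0 G_zero)
    also have "\<dots> = sum (?F \<circ> e) UNIV" by (rule sum.reindex[OF inj_on_subset[OF inj subset_UNIV]])
    also have "\<dots> = (\<Sum>a\<in>UNIV. \<Sum>b\<in>UNIV. pmf (\<rho>' (e a)) b * G u (X a) b)" by (simp add: w_e)
    finally show ?thesis .
  qed
  have Uown: "U mu0 u \<sigma> \<rho> = (\<Sum>a\<in>UNIV. G u (X a) a)" for u
    unfolding Ugen \<rho>_def using inj by (simp add: sum_return)
  have "R_BR mu0 uR \<sigma> \<rho>"
    unfolding R_BR_def
  proof
    fix \<rho>'
    have "U mu0 uR \<sigma> \<rho>' = (\<Sum>a\<in>UNIV. \<Sum>b\<in>UNIV. pmf (\<rho>' (e a)) b * G uR (X a) b)" by (rule Ugen)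
    also have "\<dots> \<le> (\<Sum>a\<in>UNIV. \<Sum>b\<in>UNIV. pmf (\<rho>' (e a)) b * G uR (X a) a)"
      using ob unfolding obed_def by (intro sum_mono mult_left_mono) auto
    also have "\<dots> = (\<Sum>a\<in>UNIV. G uR (X a) a)" by (simp add: sum_distrib_right[symmetric] sum_pmf1)
    finally show "U mu0 uR \<sigma> \<rho>' \<le> U mu0 uR \<sigma> \<rho>" using Uown by simp
  qed
  thus ?thesis using Uown by blast
qed


lemma obed_le: "obed uR y c \<Longrightarrow> G uR y b \<le> G uR y c"
  unfolding obed_def by blast

lemma local_opt:
  fixes mu0 :: "'w::finite pmf" and \<sigma> :: "'w \<Rightarrow> 'm::finite pmf" and \<rho> :: "'m \<Rightarrow> 'a::finite pmf"
  assumes mu: "\<forall>\<omega>. pmf mu0 \<omega> > 0" and card: "CARD('a) \<le> CARD('m)"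
    and R: "R_BR mu0 uR \<sigma> \<rho>"
    and opt: "\<forall>(\<sigma>'::'w \<Rightarrow> 'm pmf) \<rho>'. R_BR mu0 uR \<sigma>' \<rho>' \<longrightarrow> U mu0 uS \<sigma>' \<rho>' \<le> U mu0 uS \<sigma> \<rho>"
    and y1: "\<forall>\<omega>. 0 \<le> y1 \<omega>" and y2: "\<forall>\<omega>. 0 \<le> y2 \<omega>"
    and ysum: "\<forall>\<omega>. y1 \<omega> + y2 \<omega> = wm mu0 \<sigma> m \<omega>"
    and o1: "obed uR y1 c1" and o2: "obed uR y2 c2"
  shows "G uS y1 c1 + G uS y2 c2 \<le> (\<Sum>a\<in>UNIV. pmf (\<rho> m) a * G uS (wm mu0 \<sigma> m) a)"
proof -
  let ?R = "UNIV - {m}"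
  define X where "X a \<omega> = (\<Sum>m'\<in>?R. pmf (\<rho> m') a * wm mu0 \<sigma> m' \<omega>)
      + (if a = c1 then y1 \<omega> else 0) + (if a = c2 then y2 \<omega> else 0)" for a \<omega>
  have GX: "G u (X a) b = (\<Sum>m'\<in>?R. pmf (\<rho> m') a * G u (wm mu0 \<sigma> m') b)
      + (if a = c1 then G u y1 b else 0) + (if a = c2 then G u y2 b else 0)" for u a b
    unfolding X_def by (simp only: G_add G_sum G_scale G_if)
  have wnn: "0 \<le> wm mu0 \<sigma> m' \<omega>" for m' \<omega> unfolding wm_def using mu
    by (simp add: less_imp_le)
  have nn: "\<forall>a \<omega>. 0 \<le> X a \<omega>" unfolding X_def using y1 y2 wnn
    by (auto intro!: add_nonneg_nonneg sum_nonneg mult_nonneg_nonneg)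
  have sm: "\<forall>\<omega>. (\<Sum>a\<in>UNIV. X a \<omega>) = pmf mu0 \<omega>"
  proof
    fix \<omega>
    have "(\<Sum>a\<in>UNIV. X a \<omega>) = (\<Sum>a\<in>UNIV. \<Sum>m'\<in>?R. pmf (\<rho> m') a * wm mu0 \<sigma> m' \<omega>) + y1 \<omega> + y2 \<omega>"
      unfolding X_def by (simp add: sum.distrib)
    also have "(\<Sum>a\<in>UNIV. \<Sum>m'\<in>?R. pmf (\<rho> m') a * wm mu0 \<sigma> m' \<omega>) = (\<Sum>m'\<in>?R. \<Sum>a\<in>UNIV. pmf (\<rho> m') a * wm mu0 \<sigma> m' \<omega>)"
      by (rule sum.swap)
    also have "\<dots> = (\<Sum>m'\<in>?R. wm mu0 \<sigma> m' \<omega>)"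
      by (simp add: sum_distrib_right[symmetric] sum_pmf1)
    finally have "(\<Sum>a\<in>UNIV. X a \<omega>) = (\<Sum>m'\<in>?R. wm mu0 \<sigma> m' \<omega>) + wm mu0 \<sigma> m \<omega>"
      using ysum by simp
    also have "\<dots> = (\<Sum>m'\<in>UNIV. wm mu0 \<sigma> m' \<omega>)"
      by (simp add: sum.remove[of UNIV m] add.commute)
    also have "\<dots> = pmf mu0 \<omega>" unfolding wm_def
      by (simp add: sum_distrib_left[symmetric] sum_pmf1)
    finally show "(\<Sum>a\<in>UNIV. X a \<omega>) = pmf mu0 \<omega>" .
  qed
  have ob: "\<forall>c. obed uR (X c) c"
  proof
    fix c
    show "obed uR (X c) c" unfolding obed_def
    proof
      fix b
      have t1: "pmf (\<rho> m') c * G uR (wm mu0 \<sigma> m') b \<le> pmf (\<rho> m') c * G uR (wm mu0 \<sigma> m') c" for m'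
      proof (cases "c \<in> set_pmf (\<rho> m')")
        case True
        thus ?thesis using obed_le[OF RBR_local[OF R True]] by (simp add: mult_left_mono)
      next
        case False hence "pmf (\<rho> m') c = 0" by (simp add: set_pmf_iff)
        thus ?thesis by simp
      qed
      have "(\<Sum>m'\<in>?R. pmf (\<rho> m') c * G uR (wm mu0 \<sigma> m') b) \<le> (\<Sum>m'\<in>?R. pmf (\<rho> m') c * G uR (wm mu0 \<sigma> m') c)"
        by (rule sum_mono) (rule t1)
      moreover have "(if c = c1 then G uR y1 b else 0) \<le> (if c = c1 then G uR y1 c else 0)"
        using obed_le[OF o1] by simp
      moreover have "(if c = c2 then G uR y2 b else 0) \<le> (if c = c2 then G uR y2 c else 0)"
        using obed_le[OF o2] by simp
      ultimately show "G uR (X c) b \<le> G uR (X c) c" unfolding GX by linarith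
    qed
  qed
  obtain \<sigma>' :: "'w \<Rightarrow> 'm pmf" and \<rho>' where R': "R_BR mu0 uR \<sigma>' \<rho>'"
    and U': "U mu0 uS \<sigma>' \<rho>' = (\<Sum>c\<in>UNIV. G uS (X c) c)"
    using realize[OF mu card nn sm ob] by blast
  have "(\<Sum>c\<in>UNIV. G uS (X c) c) = (\<Sum>c\<in>UNIV. \<Sum>m'\<in>?R. pmf (\<rho> m') c * G uS (wm mu0 \<sigma> m') c)
        + G uS y1 c1 + G uS y2 c2"
    unfolding GX by (simp only: sum.distrib) simp
  also have "(\<Sum>c\<in>UNIV. \<Sum>m'\<in>?R. pmf (\<rho> m') c * G uS (wm mu0 \<sigma> m') c)
      = (\<Sum>m'\<in>?R. \<Sum>c\<in>UNIV. pmf (\<rho> m') c * G uS (wm mu0 \<sigma> m') c)"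
    by (rule sum.swap)
  finally have eqX: "(\<Sum>c\<in>UNIV. G uS (X c) c) = (\<Sum>m'\<in>?R. \<Sum>c\<in>UNIV. pmf (\<rho> m') c * G uS (wm mu0 \<sigma> m') c)
        + G uS y1 c1 + G uS y2 c2" .
  have eqU: "U mu0 uS \<sigma> \<rho> = (\<Sum>c\<in>UNIV. pmf (\<rho> m) c * G uS (wm mu0 \<sigma> m) c)
      + (\<Sum>m'\<in>?R. \<Sum>c\<in>UNIV. pmf (\<rho> m') c * G uS (wm mu0 \<sigma> m') c)"
    unfolding U_alt by (rule sum.remove) auto
  have "U mu0 uS \<sigma>' \<rho>' \<le> U mu0 uS \<sigma> \<rho>" using opt R' by blast
  thus ?thesis using U' eqX eqU by linarith
qed

lemma T_eq: "T_indices i = SDiff ` {j. j \<noteq> i} \<union> RDiff ` {j. j \<noteq> i} \<union> range IdRow"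
    unfolding T_indices_def by blast
lemma T_fin: "finite (T_indices i :: ('a::finite,'w::finite) tidx set)"
  unfolding T_eq by (intro finite_UnI finite_imageI finite)
lemma scant_sep:
  fixes uS uR :: "'a::finite \<Rightarrow> 'w::finite \<Rightarrow> real"
  assumes sc: "scant_indifferences uS uR" and sub: "insert k I \<subseteq> T_indices i"
    and kI: "k \<notin> I" and cI: "card I < CARD('w)"
  shows "\<exists>d. (\<forall>j\<in>I. d \<bullet> T_row uS uR i j = 0) \<and> d \<bullet> T_row uS uR i k > 0"
proof -
  let ?J = "insert k I"
  let ?f = "T_row uS uR i"
  have finJ: "finite ?J" by (rule finite_subset[OF sub T_fin])
  hence finI: "finite I" by simp
  have cJ: "card ?J = card I + 1" using finI kI by simp
  have "dim (?f ` ?J) = min (card ?J) CARD('w)" using sc sub unfolding scant_indifferences_def by blast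
  hence dimJ: "dim (?f ` ?J) = card ?J" using cJ cI by simp
  have c1: "card (?f ` ?J) \<le> card ?J" by (rule card_image_le[OF finJ])
  have c2: "dim (?f ` ?J) \<le> card (?f ` ?J)" using finJ by (simp add: dim_le_card')
  have ceq: "card (?f ` ?J) = card ?J" using c1 c2 dimJ by linarith
  have inj: "inj_on ?f ?J" using eq_card_imp_inj_on[OF finJ ceq] .
  have ind: "independent (?f ` ?J)"
  proof -
    have "card (?f ` ?J) = dim (?f ` ?J)" using ceq dimJ by simp
    moreover have "finite (?f ` ?J)" using finJ by simp
    ultimately have "independent (?f ` ?J) = (?f ` ?J \<subseteq> span (?f ` ?J))"
      by (rule card_eq_dim[OF subset_refl])
    thus ?thesis by (simp add: span_superset)
  qed
  have "?f k \<notin> span (?f ` ?J - {?f k})"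
    using ind unfolding dependent_def by blast
  moreover have "?f ` ?J - {?f k} = ?f ` I"
    using inj kI by (auto simp: inj_on_def)
  ultimately have nsp: "?f k \<notin> span (?f ` I)" by simp
  obtain y z where y: "y \<in> span (?f ` I)" and z: "\<And>w. w \<in> span (?f ` I) \<Longrightarrow> orthogonal z w"
    and v: "?f k = y + z"
    using orthogonal_subspace_decomp_exists by blast
  have z0: "z \<noteq> 0" using nsp y v by auto
  have "z \<bullet> ?f k = z \<bullet> z" using z[OF y] v by (simp add: inner_add_right orthogonal_def)
  hence "z \<bullet> ?f k > 0" using z0 by simp
  moreover have "\<forall>j\<in>I. z \<bullet> ?f j = 0"
    using z by (simp add: orthogonal_def span_base)
  ultimately show ?thesis by blast
qed

lemma scant_full:
  fixes uS uR :: "'a::finite \<Rightarrow> 'w::finite \<Rightarrow> real"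
  assumes sc: "scant_indifferences uS uR" and sub: "I \<subseteq> T_indices i"
    and cI: "CARD('w) \<le> card I" and orth: "\<forall>j\<in>I. x \<bullet> T_row uS uR i j = 0"
  shows "x = 0"
proof -
  let ?f = "T_row uS uR i"
  have "dim (?f ` I) = min (card I) CARD('w)" using sc sub unfolding scant_indifferences_def by blast
  hence "dim (?f ` I) = CARD('w)" using cI by simp
  hence "span (?f ` I) = UNIV" using dim_eq_full[where 'a="real^'w"] by simp
  hence "x \<in> span (?f ` I)" by simp
  hence "orthogonal x x" by (rule orthogonal_to_span) (use orth orthogonal_def in auto)
  thus ?thesis by (simp add: orthogonal_def)
qed


lemma inner_T_S: "x \<bullet> T_row uS uR i (SDiff j) = (\<Sum>\<omega>\<in>UNIV. x$\<omega> * (uS j \<omega> - uS i \<omega>))"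
  by (simp add: T_row_def inner_vec_def)
lemma inner_T_R: "x \<bullet> T_row uS uR i (RDiff j) = (\<Sum>\<omega>\<in>UNIV. x$\<omega> * (uR j \<omega> - uR i \<omega>))"
  by (simp add: T_row_def inner_vec_def)
lemma inner_T_Id: "x \<bullet> T_row uS uR i (IdRow w) = x$w"
  by (simp add: T_row_def inner_vec_def if_distrib cong: if_cong)

lemma eps_exists:
  assumes "finite A" "\<forall>i\<in>A. 0 < (\<alpha> i::real)"
  shows "\<exists>\<epsilon>>0. \<forall>i\<in>A. \<epsilon> * \<bar>K i\<bar> \<le> \<alpha> i"
  using assms
proof (induction A rule: finite_induct)
  case empty
  then show ?case by (rule_tac x=1 in exI) simp
next
  case (insert x F)
  then obtain \<epsilon> where e: "\<epsilon> > 0" "\<forall>i\<in>F. \<epsilon> * \<bar>K i\<bar> \<le> \<alpha> i" by auto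
  have ax: "\<alpha> x > 0" using insert by simp
  define e' where "e' = min \<epsilon> (\<alpha> x / (\<bar>K x\<bar> + 1))"
  have e'pos: "e' > 0" unfolding e'_def using e ax by simp
  have "e' * \<bar>K x\<bar> \<le> \<alpha> x / (\<bar>K x\<bar> + 1) * \<bar>K x\<bar>"
    unfolding e'_def by (intro mult_right_mono) auto
  also have "\<dots> \<le> \<alpha> x"
  proof -
    have "\<alpha> x / (\<bar>K x\<bar> + 1) * \<bar>K x\<bar> = \<alpha> x * (\<bar>K x\<bar> / (\<bar>K x\<bar> + 1))" by simp
    also have "\<dots> \<le> \<alpha> x * 1" using ax by (intro mult_left_mono) auto
    finally show ?thesis by simp
  qed
  finally have "e' * \<bar>K x\<bar> \<le> \<alpha> x" .
  moreover have "\<forall>i\<in>F. e' * \<bar>K i\<bar> \<le> \<alpha> i"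
  proof
    fix i assume "i \<in> F"
    have "e' * \<bar>K i\<bar> \<le> \<epsilon> * \<bar>K i\<bar>" unfolding e'_def by (intro mult_right_mono) auto
    thus "e' * \<bar>K i\<bar> \<le> \<alpha> i" using e(2) \<open>i \<in> F\<close> by fastforce
  qed
  ultimately show ?case using e'pos by auto
qed

lemma supp_equal:
  fixes mu0 :: "'w::finite pmf" and \<sigma> :: "'w \<Rightarrow> 'm::finite pmf" and \<rho> :: "'m \<Rightarrow> 'a::finite pmf"
  assumes mu: "\<forall>\<omega>. pmf mu0 \<omega> > 0" and card: "CARD('a) \<le> CARD('m)"
    and R: "R_BR mu0 uR \<sigma> \<rho>"
    and opt: "\<forall>(\<sigma>'::'w \<Rightarrow> 'm pmf) \<rho>'. R_BR mu0 uR \<sigma>' \<rho>' \<longrightarrow> U mu0 uS \<sigma>' \<rho>' \<le> U mu0 uS \<sigma> \<rho>"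
    and c: "c \<in> set_pmf (\<rho> m)"
  shows "G uS (wm mu0 \<sigma> m) c = (\<Sum>a\<in>UNIV. pmf (\<rho> m) a * G uS (wm mu0 \<sigma> m) a)"
proof -
  let ?g = "G uS (wm mu0 \<sigma> m)"
  let ?S = "set_pmf (\<rho> m)"
  have fin: "finite ?S" by simp
  have ne: "?S \<noteq> {}" by (rule set_pmf_not_empty)
  have "Max (?g ` ?S) \<in> ?g ` ?S" using fin ne by (intro Max_in) auto
  then obtain cs where cs: "cs \<in> ?S" "Max (?g ` ?S) = ?g cs" by blast
  have csmax: "\<forall>i\<in>?S. ?g i \<le> ?g cs" using cs(2) fin by (metis Max_ge finite_imageI imageI)
  have "?g cs + G uS (\<lambda>_. 0) cs \<le> (\<Sum>a\<in>UNIV. pmf (\<rho> m) a * ?g a)"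
  proof (rule local_opt[OF mu card R opt])
    show "\<forall>\<omega>. 0 \<le> wm mu0 \<sigma> m \<omega>" unfolding wm_def using mu by (simp add: less_imp_le)
    show "obed uR (wm mu0 \<sigma> m) cs" by (rule RBR_local[OF R cs(1)])
    show "obed uR (\<lambda>_. 0) cs" unfolding obed_def G_def by simp
  qed auto
  hence le: "?g cs \<le> (\<Sum>a\<in>UNIV. pmf (\<rho> m) a * ?g a)" by (simp add: G_zero)
  have eq: "?g i = ?g cs" if "i \<in> ?S" for i using avg_max[of "\<rho> m" ?g "?g cs" i] csmax le that by blast
  have "(\<Sum>a\<in>UNIV. pmf (\<rho> m) a * ?g a) = (\<Sum>a\<in>UNIV. pmf (\<rho> m) a * ?g cs)"
  proof (rule sum.cong[OF refl])
    fix a show "pmf (\<rho> m) a * ?g a = pmf (\<rho> m) a * ?g cs"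
    proof (cases "a \<in> ?S")
      case True thus ?thesis using eq by simp
    next
      case False hence "pmf (\<rho> m) a = 0" by (simp add: set_pmf_iff)
      thus ?thesis by simp
    qed
  qed
  also have "\<dots> = ?g cs" by (simp add: sum_distrib_right[symmetric] sum_pmf1)
  finally show ?thesis using eq[OF c] by simp
qed


lemma G_lin: "G u (\<lambda>\<omega>. (y \<omega> + e * d \<omega>) / 2) c = (G u y c + e * (\<Sum>\<omega>\<in>UNIV. d \<omega> * u c \<omega>)) / 2"
  unfolding G_def by (simp add: sum_divide_distrib[symmetric] sum.distrib sum_distrib_left algebra_simps)
lemma G_lin2: "G u (\<lambda>\<omega>. (y \<omega> - e * d \<omega>) / 2) c = (G u y c - e * (\<Sum>\<omega>\<in>UNIV. d \<omega> * u c \<omega>)) / 2"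
  unfolding G_def by (simp add: sum_divide_distrib[symmetric] sum_subtractf sum_distrib_left algebra_simps)

lemma pure_at_used:
  fixes mu0 :: "'w::finite pmf" and \<sigma> :: "'w \<Rightarrow> 'm::finite pmf" and \<rho> :: "'m \<Rightarrow> 'a::finite pmf"
  assumes mu: "\<forall>\<omega>. pmf mu0 \<omega> > 0" and card: "CARD('a) \<le> CARD('m)"
    and sc: "scant_indifferences uS uR"
    and R: "R_BR mu0 uR \<sigma> \<rho>"
    and opt: "\<forall>(\<sigma>'::'w \<Rightarrow> 'm pmf) \<rho>'. R_BR mu0 uR \<sigma>' \<rho>' \<longrightarrow> U mu0 uS \<sigma>' \<rho>' \<le> U mu0 uS \<sigma> \<rho>"
    and used: "pmf (\<sigma> \<omega>0) m > 0"
    and a: "a \<in> set_pmf (\<rho> m)" and b: "b \<in> set_pmf (\<rho> m)"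
  shows "a = b"
proof (rule ccontr)
  assume ab: "a \<noteq> b"
  define w where "w = wm mu0 \<sigma> m"
  have wnn: "0 \<le> w \<omega>" for \<omega> unfolding w_def wm_def using mu by (simp add: less_imp_le)
  define W where "W = {\<omega>. w \<omega> \<noteq> 0}"
  define Ropt where "Ropt = {c. obed uR w c}"
  have aR: "a \<in> Ropt" using RBR_local[OF R a] unfolding Ropt_def w_def by simp
  have bR: "b \<in> Ropt" using RBR_local[OF R b] unfolding Ropt_def w_def by simp
  have Geq: "G uR w c = G uR w a" if "c \<in> Ropt" for c
  proof -
    have "\<forall>b. G uR w b \<le> G uR w c" "\<forall>b. G uR w b \<le> G uR w a"
      using that aR unfolding Ropt_def obed_def by auto
    thus ?thesis by (meson antisym)
  qed
  define I0 where "I0 = RDiff ` (Ropt - {a}) \<union> IdRow ` (- W)"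
  have I0sub: "I0 \<subseteq> T_indices a" unfolding I0_def T_indices_def by auto
  have SbT: "insert (SDiff b) I0 \<subseteq> T_indices a" using I0sub ab unfolding T_indices_def by auto
  have Sb: "SDiff b \<notin> I0" unfolding I0_def by auto
  define wv :: "real^'w" where "wv = (\<chi> \<omega>. w \<omega>)"
  have orthw: "\<forall>j\<in>I0. wv \<bullet> T_row uS uR a j = 0"
  proof
    fix j assume "j \<in> I0"
    then consider c where "c \<in> Ropt" "j = RDiff c" | \<omega> where "\<omega> \<notin> W" "j = IdRow \<omega>"
      unfolding I0_def by auto
    thus "wv \<bullet> T_row uS uR a j = 0"
    proof cases
      case 1
      have "wv \<bullet> T_row uS uR a j = (\<Sum>\<omega>\<in>UNIV. w \<omega> * (uR c \<omega> - uR a \<omega>))"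
        unfolding 1 inner_T_R wv_def by simp
      also have "\<dots> = G uR w c - G uR w a" unfolding G_def by (simp add: algebra_simps sum_subtractf)
      finally show ?thesis using Geq[OF 1(1)] by simp
    next
      case 2
      have "wv \<bullet> T_row uS uR a j = wv $ \<omega>" unfolding 2(2) by (rule inner_T_Id)
      thus ?thesis using 2(1) unfolding wv_def W_def by simp
    qed
  qed
  have cI0: "card I0 < CARD('w)"
  proof (rule ccontr)
    assume "\<not> card I0 < CARD('w)"
    hence "CARD('w) \<le> card I0" by simp
    hence "wv = 0" using scant_full[OF sc I0sub _ orthw] by simp
    hence "w \<omega>0 = 0" unfolding wv_def by (metis vec_lambda_beta zero_index)
    moreover have "w \<omega>0 > 0" unfolding w_def wm_def using mu used by simp
    ultimately show False by simp
  qed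
  obtain d :: "real^'w" where d0: "\<forall>j\<in>I0. d \<bullet> T_row uS uR a j = 0"
    and dpos: "d \<bullet> T_row uS uR a (SDiff b) > 0"
    using scant_sep[OF sc SbT Sb cI0] by blast
  define D where "D u c = (\<Sum>\<omega>\<in>UNIV. d$\<omega> * u c \<omega>)" for u :: "'a \<Rightarrow> 'w \<Rightarrow> real" and c
  have dW: "d$\<omega> = 0" if "\<omega> \<notin> W" for \<omega>
  proof -
    have "IdRow \<omega> \<in> I0" unfolding I0_def using that by auto
    thus ?thesis using d0 inner_T_Id by metis
  qed
  have DR: "D uR c = D uR a" if "c \<in> Ropt" for c
  proof (cases "c = a")
    case False
    hence "RDiff c \<in> I0" unfolding I0_def using that by auto
    hence "(\<Sum>\<omega>\<in>UNIV. d$\<omega> * (uR c \<omega> - uR a \<omega>)) = 0" using d0 inner_T_R by metis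
    thus ?thesis unfolding D_def by (simp add: algebra_simps sum_subtractf)
  qed simp
  have delta: "D uS b - D uS a > 0"
    using dpos unfolding inner_T_S D_def by (simp add: algebra_simps sum_subtractf)
  have Wpos: "\<forall>\<omega>\<in>W. 0 < w \<omega>" using wnn unfolding W_def by (simp add: less_le)
  have gapb: "\<forall>c\<in>-Ropt. 0 < G uR w b - G uR w c"
  proof
    fix c assume "c \<in> -Ropt"
    then obtain b' where "G uR w c < G uR w b'" unfolding Ropt_def obed_def by (auto simp: not_le)
    moreover have "G uR w b' \<le> G uR w b" using bR unfolding Ropt_def obed_def by blast
    ultimately show "0 < G uR w b - G uR w c" by simp
  qed
  have gapa: "\<forall>c\<in>-Ropt. 0 < G uR w a - G uR w c"
  proof
    fix c assume "c \<in> -Ropt"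
    then obtain b' where "G uR w c < G uR w b'" unfolding Ropt_def obed_def by (auto simp: not_le)
    moreover have "G uR w b' \<le> G uR w a" using aR unfolding Ropt_def obed_def by blast
    ultimately show "0 < G uR w a - G uR w c" by simp
  qed
  obtain e1 where e1: "e1 > 0" "\<forall>\<omega>\<in>W. e1 * \<bar>d$\<omega>\<bar> \<le> w \<omega>"
    using eps_exists[of W w "\<lambda>\<omega>. d$\<omega>"] Wpos by auto
  obtain e2 where e2: "e2 > 0" "\<forall>c\<in>-Ropt. e2 * \<bar>D uR c - D uR b\<bar> \<le> G uR w b - G uR w c"
    using eps_exists[of "-Ropt" "\<lambda>c. G uR w b - G uR w c" "\<lambda>c. D uR c - D uR b"] gapb by auto
  obtain e3 where e3: "e3 > 0" "\<forall>c\<in>-Ropt. e3 * \<bar>D uR c - D uR a\<bar> \<le> G uR w a - G uR w c"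
    using eps_exists[of "-Ropt" "\<lambda>c. G uR w a - G uR w c" "\<lambda>c. D uR c - D uR a"] gapa by auto
  define e where "e = min e1 (min e2 e3)"
  have epos: "e > 0" unfolding e_def using e1 e2 e3 by simp
  have ele: "e \<le> e1" "e \<le> e2" "e \<le> e3" unfolding e_def by auto
  define y1 where "y1 \<omega> = (w \<omega> + e * d$\<omega>) / 2" for \<omega>
  define y2 where "y2 \<omega> = (w \<omega> - e * d$\<omega>) / 2" for \<omega>
  have small: "\<bar>e * d$\<omega>\<bar> \<le> w \<omega>" for \<omega>
  proof (cases "\<omega> \<in> W")
    case True
    have "\<bar>e * d$\<omega>\<bar> = e * \<bar>d$\<omega>\<bar>" using epos by (simp add: abs_mult)
    also have "\<dots> \<le> e1 * \<bar>d$\<omega>\<bar>" using ele by (intro mult_right_mono) auto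
    also have "\<dots> \<le> w \<omega>" using e1 True by blast
    finally show ?thesis .
  next
    case False thus ?thesis using dW wnn by simp
  qed
  have y1nn: "\<forall>\<omega>. 0 \<le> y1 \<omega>" unfolding y1_def using small by (smt (verit) abs_le_D2 divide_nonneg_pos zero_less_numeral)
  have y2nn: "\<forall>\<omega>. 0 \<le> y2 \<omega>" unfolding y2_def using small by (smt (verit) abs_le_D1 divide_nonneg_pos zero_less_numeral)
  have ysum: "\<forall>\<omega>. y1 \<omega> + y2 \<omega> = wm mu0 \<sigma> m \<omega>" unfolding y1_def y2_def w_def by (simp add: field_simps)
  have Gy1: "G u y1 c = (G u w c + e * D u c) / 2" for u c
    unfolding y1_def D_def by (rule G_lin)
  have Gy2: "G u y2 c = (G u w c - e * D u c) / 2" for u c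
    unfolding y2_def D_def by (rule G_lin2)
  have o1: "obed uR y1 b" unfolding obed_def
  proof
    fix c
    show "G uR y1 c \<le> G uR y1 b"
    proof (cases "c \<in> Ropt")
      case True
      thus ?thesis unfolding Gy1 using Geq[OF True] Geq[OF bR] DR[OF True] DR[OF bR] by simp
    next
      case False
      have "e * (D uR c - D uR b) \<le> e * \<bar>D uR c - D uR b\<bar>" using epos by (intro mult_left_mono) auto
      also have "\<dots> \<le> e2 * \<bar>D uR c - D uR b\<bar>" using ele by (intro mult_right_mono) auto
      also have "\<dots> \<le> G uR w b - G uR w c" using e2 False by blast
      finally have h: "e * (D uR c - D uR b) \<le> G uR w b - G uR w c" .
      have "G uR w c + e * D uR c \<le> G uR w b + e * D uR b" using h unfolding right_diff_distrib by linarith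
      thus ?thesis unfolding Gy1 by (simp add: divide_right_mono)
    qed
  qed
  have o2: "obed uR y2 a" unfolding obed_def
  proof
    fix c
    show "G uR y2 c \<le> G uR y2 a"
    proof (cases "c \<in> Ropt")
      case True
      thus ?thesis unfolding Gy2 using Geq[OF True] DR[OF True] by simp
    next
      case False
      have "e * (D uR a - D uR c) \<le> e * \<bar>D uR c - D uR a\<bar>" using epos by (intro mult_left_mono) auto
      also have "\<dots> \<le> e3 * \<bar>D uR c - D uR a\<bar>" using ele by (intro mult_right_mono) auto
      also have "\<dots> \<le> G uR w a - G uR w c" using e3 False by blast
      finally have h: "e * (D uR a - D uR c) \<le> G uR w a - G uR w c" .
      have "G uR w c - e * D uR c \<le> G uR w a - e * D uR a" using h unfolding right_diff_distrib by linarith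
      thus ?thesis unfolding Gy2 by (simp add: divide_right_mono)
    qed
  qed
  have "G uS y1 b + G uS y2 a \<le> (\<Sum>c\<in>UNIV. pmf (\<rho> m) c * G uS (wm mu0 \<sigma> m) c)"
    by (rule local_opt[OF mu card R opt y1nn y2nn ysum o1 o2])
  moreover have "G uS (wm mu0 \<sigma> m) a = (\<Sum>c\<in>UNIV. pmf (\<rho> m) c * G uS (wm mu0 \<sigma> m) c)"
    by (rule supp_equal[OF mu card R opt a])
  moreover have "G uS (wm mu0 \<sigma> m) b = (\<Sum>c\<in>UNIV. pmf (\<rho> m) c * G uS (wm mu0 \<sigma> m) c)"
    by (rule supp_equal[OF mu card R opt b])
  moreover have "e * (D uS b - D uS a) > 0" using epos delta by simp
  ultimately show False unfolding Gy1 Gy2 w_def by (simp add: field_simps)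
qed


lemma strict_pref:
  fixes uS uR :: "'a::finite \<Rightarrow> 'w::finite \<Rightarrow> real"
  assumes sc: "scant_indifferences uS uR" and ab: "a \<noteq> b"
  shows "uS a \<omega> \<noteq> uS b \<omega>"
proof
  assume eq: "uS a \<omega> = uS b \<omega>"
  let ?I = "IdRow ` (UNIV - {\<omega>}) :: ('a,'w) tidx set"
  have sub: "insert (SDiff b) ?I \<subseteq> T_indices a" using ab unfolding T_indices_def by auto
  have nin: "SDiff b \<notin> ?I" by auto
  have "card ?I = card (UNIV - {\<omega>} :: 'w set)" by (rule card_image) (simp add: inj_on_def)
  also have "\<dots> = CARD('w) - 1" by (simp add: card_Diff_singleton)
  also have "\<dots> < CARD('w)" by simp
  finally have cI: "card ?I < CARD('w)" .
  obtain d :: "real^'w" where d0: "\<forall>j\<in>?I. d \<bullet> T_row uS uR a j = 0"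
    and dpos: "d \<bullet> T_row uS uR a (SDiff b) > 0"
    using scant_sep[OF sc sub nin cI] by blast
  have "d$\<omega>' = 0" if "\<omega>' \<noteq> \<omega>" for \<omega>'
  proof -
    have "IdRow \<omega>' \<in> ?I" using that by auto
    thus ?thesis using d0 inner_T_Id by metis
  qed
  hence h: "\<forall>\<omega>'. d$\<omega>' * (uS b \<omega>' - uS a \<omega>') = 0" using eq by (metis diff_self mult_zero_left mult_zero_right)
  have "(\<Sum>\<omega>'\<in>UNIV. d$\<omega>' * (uS b \<omega>' - uS a \<omega>')) = 0" by (rule sum.neutral) (use h in blast)
  hence "d \<bullet> T_row uS uR a (SDiff b) = 0" unfolding inner_T_S .
  thus False using dpos by simp
qed

lemma U_pure_resp: "U mu0 u \<sigma> (\<lambda>m. return_pmf (g m)) = (\<Sum>\<omega>\<in>UNIV. pmf mu0 \<omega> * (\<Sum>m\<in>UNIV. pmf (\<sigma> \<omega>) m * u (g m) \<omega>))"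
  unfolding U_alt2 vv_def by (simp add: sum_return)

lemma U_pure_msg: "U mu0 u (\<lambda>\<omega>. return_pmf (f \<omega>)) \<rho> = (\<Sum>\<omega>\<in>UNIV. pmf mu0 \<omega> * vv \<rho> u (f \<omega>) \<omega>)"
  unfolding U_alt2 by (simp add: sum_return)

lemma final_from_opt:
  fixes mu0 :: "'w::finite pmf" and \<sigma> :: "'w \<Rightarrow> 'm::finite pmf" and \<rho> :: "'m \<Rightarrow> 'a::finite pmf"
  assumes mu: "\<forall>\<omega>. pmf mu0 \<omega> > 0" and card: "CARD('a) \<le> CARD('m)"
    and sc: "scant_indifferences uS uR"
    and E: "cheap_talk_eq mu0 uS uR \<sigma> \<rho>"
    and opt: "\<forall>(\<sigma>'::'w \<Rightarrow> 'm pmf) \<rho>'. R_BR mu0 uR \<sigma>' \<rho>' \<longrightarrow> U mu0 uS \<sigma>' \<rho>' \<le> U mu0 uS \<sigma> \<rho>"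
  shows "\<exists>(\<sigma>h :: 'w \<Rightarrow> 'm pmf) (\<rho>h :: 'm \<Rightarrow> 'a pmf).
           partitional \<sigma>h \<and> pure_strategy \<rho>h \<and> cheap_talk_eq mu0 uS uR \<sigma>h \<rho>h \<and>
           U mu0 uS \<sigma>h \<rho>h = U mu0 uS \<sigma> \<rho> \<and> card (used_messages \<sigma>h) \<le> CARD('a)"
proof -
  have R: "R_BR mu0 uR \<sigma> \<rho>" and S: "S_BR mu0 uS \<sigma> \<rho>" using E unfolding cheap_talk_eq_def by auto
  define act where "act m = (SOME c. c \<in> set_pmf (\<rho> m))" for m
  have act_in: "act m \<in> set_pmf (\<rho> m)" for m
    unfolding act_def using set_pmf_not_empty by (metis all_not_in_conv someI_ex)
  have ret: "\<rho> m = return_pmf (act m)" if "m \<in> set_pmf (\<sigma> \<omega>)" for m \<omega>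
  proof -
    have "pmf (\<sigma> \<omega>) m > 0" using that by (simp add: pmf_positive)
    hence "\<forall>c\<in>set_pmf (\<rho> m). c = act m"
      using pure_at_used[OF mu card sc R opt _ _ act_in] by blast
    hence "set_pmf (\<rho> m) \<subseteq> {act m}" by blast
    thus ?thesis by (simp add: set_pmf_subset_singleton)
  qed
  have vv_used: "vv \<rho> uS m \<omega>' = uS (act m) \<omega>'" if "m \<in> set_pmf (\<sigma> \<omega>)" for m \<omega> \<omega>'
    unfolding vv_def ret[OF that] by (rule sum_return)
  define ms where "ms \<omega> = (SOME m. m \<in> set_pmf (\<sigma> \<omega>))" for \<omega>
  have ms_in: "ms \<omega> \<in> set_pmf (\<sigma> \<omega>)" for \<omega>
    unfolding ms_def using set_pmf_not_empty by (metis all_not_in_conv someI_ex)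
  define aa where "aa \<omega> = act (ms \<omega>)" for \<omega>
  have K1: "act m = aa \<omega>" if "m \<in> set_pmf (\<sigma> \<omega>)" for m \<omega>
  proof -
    have "vv \<rho> uS (ms \<omega>) \<omega> \<le> vv \<rho> uS m \<omega>" using SBR_local[OF S _ that] mu by blast
    moreover have "vv \<rho> uS m \<omega> \<le> vv \<rho> uS (ms \<omega>) \<omega>" using SBR_local[OF S _ ms_in] mu by blast
    ultimately have "uS (act m) \<omega> = uS (aa \<omega>) \<omega>"
      unfolding aa_def vv_used[OF that] vv_used[OF ms_in] by simp
    thus ?thesis using strict_pref[OF sc] by blast
  qed
  have K2: "uS (aa \<omega>') \<omega> \<le> uS (aa \<omega>) \<omega>" for \<omega> \<omega>'
  proof -
    have "vv \<rho> uS (ms \<omega>') \<omega> \<le> vv \<rho> uS (ms \<omega>) \<omega>" using SBR_local[OF S _ ms_in] mu by blast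
    thus ?thesis unfolding aa_def vv_used[OF ms_in] .
  qed
  have collapse: "(\<Sum>m\<in>UNIV. pmf (\<sigma> \<omega>) m * F (act m)) = F (aa \<omega>)" for \<omega> and F :: "'a \<Rightarrow> real"
  proof -
    have "(\<Sum>m\<in>UNIV. pmf (\<sigma> \<omega>) m * F (act m)) = (\<Sum>m\<in>UNIV. pmf (\<sigma> \<omega>) m * F (aa \<omega>))"
    proof (rule sum.cong[OF refl])
      fix m show "pmf (\<sigma> \<omega>) m * F (act m) = pmf (\<sigma> \<omega>) m * F (aa \<omega>)"
      proof (cases "m \<in> set_pmf (\<sigma> \<omega>)")
        case True thus ?thesis using K1 by simp
      next
        case False hence "pmf (\<sigma> \<omega>) m = 0" by (simp add: set_pmf_iff)
        thus ?thesis by simp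
      qed
    qed
    also have "\<dots> = F (aa \<omega>)" by (simp add: sum_distrib_right[symmetric] sum_pmf1)
    finally show ?thesis .
  qed
  obtain e :: "'a \<Rightarrow> 'm" where inj: "inj e"
    using card_le_inj[of "UNIV::'a set" "UNIV::'m set"] card by auto
  obtain w0 :: 'w where True by simp
  define r where "r m = (if m \<in> e ` range aa then inv e m else aa w0)" for m
  have r_range: "r m \<in> range aa" for m unfolding r_def using inj by auto
  have r_e: "r (e (aa \<omega>)) = aa \<omega>" for \<omega> unfolding r_def using inj by auto
  define \<sigma>h :: "'w \<Rightarrow> 'm pmf" where "\<sigma>h \<omega> = return_pmf (e (aa \<omega>))" for \<omega>
  define \<rho>h :: "'m \<Rightarrow> 'a pmf" where "\<rho>h m = return_pmf (r m)" for m
  have part: "partitional \<sigma>h" unfolding partitional_def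
  proof
    fix \<omega> show "\<exists>m. pmf (\<sigma>h \<omega>) m = 1" unfolding \<sigma>h_def by (rule exI[of _ "e (aa \<omega>)"]) simp
  qed
  have pure: "pure_strategy \<rho>h" unfolding pure_strategy_def \<rho>h_def by auto
  have Uh: "U mu0 u \<sigma>h \<rho>h = (\<Sum>\<omega>\<in>UNIV. pmf mu0 \<omega> * u (aa \<omega>) \<omega>)" for u
    unfolding \<sigma>h_def \<rho>h_def U_pure_msg vv_def by (simp add: sum_return r_e)
  have Uorig: "U mu0 uS \<sigma> \<rho> = (\<Sum>\<omega>\<in>UNIV. pmf mu0 \<omega> * uS (aa \<omega>) \<omega>)"
  proof -
    have "(\<Sum>m\<in>UNIV. pmf (\<sigma> \<omega>) m * vv \<rho> uS m \<omega>) = uS (aa \<omega>) \<omega>" for \<omega>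
    proof -
      have "(\<Sum>m\<in>UNIV. pmf (\<sigma> \<omega>) m * vv \<rho> uS m \<omega>) = (\<Sum>m\<in>UNIV. pmf (\<sigma> \<omega>) m * uS (act m) \<omega>)"
      proof (rule sum.cong[OF refl])
        fix m show "pmf (\<sigma> \<omega>) m * vv \<rho> uS m \<omega> = pmf (\<sigma> \<omega>) m * uS (act m) \<omega>"
        proof (cases "m \<in> set_pmf (\<sigma> \<omega>)")
          case True thus ?thesis using vv_used by simp
        next
          case False hence "pmf (\<sigma> \<omega>) m = 0" by (simp add: set_pmf_iff)
          thus ?thesis by simp
        qed
      qed
      also have "\<dots> = uS (aa \<omega>) \<omega>" by (rule collapse[of \<omega> "\<lambda>c. uS c \<omega>"])
      finally show ?thesis .
    qed
    thus ?thesis unfolding U_alt2 by simp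
  qed
  have SBRh: "S_BR mu0 uS \<sigma>h \<rho>h" unfolding S_BR_def
  proof
    fix \<sigma>' :: "'w \<Rightarrow> 'm pmf"
    have "U mu0 uS \<sigma>' \<rho>h = (\<Sum>\<omega>\<in>UNIV. pmf mu0 \<omega> * (\<Sum>m\<in>UNIV. pmf (\<sigma>' \<omega>) m * uS (r m) \<omega>))"
      unfolding \<rho>h_def by (rule U_pure_resp)
    also have "\<dots> \<le> (\<Sum>\<omega>\<in>UNIV. pmf mu0 \<omega> * (\<Sum>m\<in>UNIV. pmf (\<sigma>' \<omega>) m * uS (aa \<omega>) \<omega>))"
    proof (intro sum_mono mult_left_mono)
      fix \<omega> m
      obtain \<omega>' where "r m = aa \<omega>'" using r_range by blast
      thus "uS (r m) \<omega> \<le> uS (aa \<omega>) \<omega>" using K2 by simp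
    qed (use mu in \<open>auto simp: less_imp_le\<close>)
    also have "\<dots> = (\<Sum>\<omega>\<in>UNIV. pmf mu0 \<omega> * uS (aa \<omega>) \<omega>)"
      by (simp add: sum_distrib_right[symmetric] sum_pmf1)
    finally show "U mu0 uS \<sigma>' \<rho>h \<le> U mu0 uS \<sigma>h \<rho>h" using Uh by simp
  qed
  have RBRh: "R_BR mu0 uR \<sigma>h \<rho>h" unfolding R_BR_def
  proof
    fix \<rho>' :: "'m \<Rightarrow> 'a pmf"
    define F where "F c \<omega> = (\<Sum>b\<in>UNIV. pmf (\<rho>' (e c)) b * uR b \<omega>)" for c \<omega>
    have regroup: "(\<Sum>\<omega>\<in>UNIV. pmf mu0 \<omega> * H (aa \<omega>) \<omega>) = (\<Sum>m\<in>UNIV. \<Sum>\<omega>\<in>UNIV. wm mu0 \<sigma> m \<omega> * H (act m) \<omega>)"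
      for H :: "'a \<Rightarrow> 'w \<Rightarrow> real"
    proof -
      have "(\<Sum>m\<in>UNIV. \<Sum>\<omega>\<in>UNIV. wm mu0 \<sigma> m \<omega> * H (act m) \<omega>) = (\<Sum>\<omega>\<in>UNIV. \<Sum>m\<in>UNIV. wm mu0 \<sigma> m \<omega> * H (act m) \<omega>)"
        by (rule sum.swap)
      also have "\<dots> = (\<Sum>\<omega>\<in>UNIV. pmf mu0 \<omega> * (\<Sum>m\<in>UNIV. pmf (\<sigma> \<omega>) m * H (act m) \<omega>))"
        unfolding wm_def by (simp add: sum_distrib_left mult_ac)
      also have "\<dots> = (\<Sum>\<omega>\<in>UNIV. pmf mu0 \<omega> * H (aa \<omega>) \<omega>)"
        using collapse[of _ "\<lambda>c. H c _"] by simp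
      finally show ?thesis by simp
    qed
    have "U mu0 uR \<sigma>h \<rho>' = (\<Sum>\<omega>\<in>UNIV. pmf mu0 \<omega> * F (aa \<omega>) \<omega>)"
      unfolding \<sigma>h_def U_pure_msg vv_def F_def by simp
    also have "\<dots> = (\<Sum>m\<in>UNIV. \<Sum>\<omega>\<in>UNIV. wm mu0 \<sigma> m \<omega> * F (act m) \<omega>)" by (rule regroup)
    also have "\<dots> = (\<Sum>m\<in>UNIV. \<Sum>b\<in>UNIV. pmf (\<rho>' (e (act m))) b * G uR (wm mu0 \<sigma> m) b)"
    proof (rule sum.cong[OF refl])
      fix m
      show "(\<Sum>\<omega>\<in>UNIV. wm mu0 \<sigma> m \<omega> * F (act m) \<omega>) = (\<Sum>b\<in>UNIV. pmf (\<rho>' (e (act m))) b * G uR (wm mu0 \<sigma> m) b)"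
        unfolding F_def G_def by (simp add: sum_distrib_left mult_ac) (rule sum.swap)
    qed
    also have "\<dots> \<le> (\<Sum>m\<in>UNIV. \<Sum>b\<in>UNIV. pmf (\<rho>' (e (act m))) b * G uR (wm mu0 \<sigma> m) (act m))"
      using RBR_local[OF R act_in] unfolding obed_def by (intro sum_mono mult_left_mono) auto
    also have "\<dots> = (\<Sum>m\<in>UNIV. G uR (wm mu0 \<sigma> m) (act m))"
      by (simp add: sum_distrib_right[symmetric] sum_pmf1)
    also have "\<dots> = (\<Sum>m\<in>UNIV. \<Sum>\<omega>\<in>UNIV. wm mu0 \<sigma> m \<omega> * uR (act m) \<omega>)" unfolding G_def by simp
    also have "\<dots> = (\<Sum>\<omega>\<in>UNIV. pmf mu0 \<omega> * uR (aa \<omega>) \<omega>)" by (rule regroup[symmetric])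
    finally show "U mu0 uR \<sigma>h \<rho>' \<le> U mu0 uR \<sigma>h \<rho>h" using Uh by simp
  qed
  have "used_messages \<sigma>h \<subseteq> e ` range aa"
    unfolding used_messages_def \<sigma>h_def by (auto simp: pmf_return split: split_indicator)
  hence "card (used_messages \<sigma>h) \<le> card (e ` range aa)" by (intro card_mono) auto
  also have "\<dots> \<le> card (range aa)" by (rule card_image_le) simp
  also have "\<dots> \<le> CARD('a)" by (rule card_mono) auto
  finally have cardh: "card (used_messages \<sigma>h) \<le> CARD('a)" .
  show ?thesis
    using part pure SBRh RBRh cardh Uh Uorig unfolding cheap_talk_eq_def by metis
qed


lemma U_le1:
  assumes "\<forall>a \<omega>. u a \<omega> \<le> 1" "\<forall>a \<omega>. 0 \<le> u a \<omega>"
  shows "U mu0 u \<sigma> \<rho> \<le> 1"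
proof -
  have v: "vv \<rho> u m \<omega> \<le> 1" for m \<omega>
  proof -
    have "vv \<rho> u m \<omega> \<le> (\<Sum>a\<in>UNIV. pmf (\<rho> m) a * 1)" unfolding vv_def
      using assms by (intro sum_mono mult_left_mono) auto
    thus ?thesis by (simp add: sum_pmf1)
  qed
  have i: "(\<Sum>m\<in>UNIV. pmf (\<sigma> \<omega>) m * vv \<rho> u m \<omega>) \<le> 1" for \<omega>
  proof -
    have "(\<Sum>m\<in>UNIV. pmf (\<sigma> \<omega>) m * vv \<rho> u m \<omega>) \<le> (\<Sum>m\<in>UNIV. pmf (\<sigma> \<omega>) m * 1)"
      using v by (intro sum_mono mult_left_mono) auto
    thus ?thesis by (simp add: sum_pmf1)
  qed
  have "U mu0 u \<sigma> \<rho> \<le> (\<Sum>\<omega>\<in>UNIV. pmf mu0 \<omega> * 1)" unfolding U_alt2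
    using i by (intro sum_mono mult_left_mono) auto
  thus ?thesis by (simp add: sum_pmf1)
qed

lemma babbling:
  fixes mu0 :: "'w::finite pmf" and uS uR :: "'a::finite \<Rightarrow> 'w \<Rightarrow> real"
  shows "\<exists>(\<sigma>::'w \<Rightarrow> 'm::finite pmf) \<rho>. cheap_talk_eq mu0 uS uR \<sigma> \<rho>"
proof -
  obtain as where as: "\<forall>b. G uR (pmf mu0) b \<le> G uR (pmf mu0) as" using ex_max[of "G uR (pmf mu0)"] by blast
  obtain m0 :: 'm where True by simp
  define \<sigma>0 :: "'w \<Rightarrow> 'm pmf" where "\<sigma>0 \<omega> = return_pmf m0" for \<omega>
  define \<rho>0 :: "'m \<Rightarrow> 'a pmf" where "\<rho>0 m = return_pmf as" for m
  have "S_BR mu0 uS \<sigma>0 \<rho>0" unfolding S_BR_def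
  proof
    fix \<sigma>' :: "'w \<Rightarrow> 'm pmf"
    have "U mu0 uS \<sigma>' \<rho>0 = (\<Sum>\<omega>\<in>UNIV. pmf mu0 \<omega> * uS as \<omega>)"
      unfolding \<rho>0_def U_pure_resp by (simp add: sum_distrib_right[symmetric] sum_pmf1)
    moreover have "U mu0 uS \<sigma>0 \<rho>0 = (\<Sum>\<omega>\<in>UNIV. pmf mu0 \<omega> * uS as \<omega>)"
      unfolding \<rho>0_def \<sigma>0_def U_pure_resp by (simp add: sum_return)
    ultimately show "U mu0 uS \<sigma>' \<rho>0 \<le> U mu0 uS \<sigma>0 \<rho>0" by simp
  qed
  moreover have "R_BR mu0 uR \<sigma>0 \<rho>0" unfolding R_BR_def
  proof
    fix \<rho>' :: "'m \<Rightarrow> 'a pmf"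
    have "U mu0 uR \<sigma>0 \<rho>' = (\<Sum>a\<in>UNIV. pmf (\<rho>' m0) a * G uR (pmf mu0) a)"
      unfolding \<sigma>0_def U_pure_msg vv_def G_def
      by (simp add: sum_distrib_left mult_ac) (rule sum.swap)
    also have "\<dots> \<le> (\<Sum>a\<in>UNIV. pmf (\<rho>' m0) a * G uR (pmf mu0) as)"
      using as by (intro sum_mono mult_left_mono) auto
    also have "\<dots> = G uR (pmf mu0) as" by (simp add: sum_distrib_right[symmetric] sum_pmf1)
    also have "\<dots> = U mu0 uR \<sigma>0 \<rho>0"
      unfolding \<rho>0_def \<sigma>0_def U_pure_resp G_def by (simp add: sum_return mult_ac)
    finally show "U mu0 uR \<sigma>0 \<rho>' \<le> U mu0 uR \<sigma>0 \<rho>0" .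
  qed
  ultimately show ?thesis unfolding cheap_talk_eq_def by blast
qed

definition vs :: "('w::finite \<Rightarrow> 'm::finite pmf) \<Rightarrow> real^('w \<times> 'm)" where
  "vs \<sigma> = (\<chi> p. pmf (\<sigma> (fst p)) (snd p))"
definition vr :: "('m::finite \<Rightarrow> 'a::finite pmf) \<Rightarrow> real^('m \<times> 'a)" where
  "vr \<rho> = (\<chi> p. pmf (\<rho> (fst p)) (snd p))"
definition Phi :: "'w pmf \<Rightarrow> ('a \<Rightarrow> 'w \<Rightarrow> real) \<Rightarrow> real^('w::finite \<times> 'm::finite) \<Rightarrow> real^('m \<times> 'a::finite) \<Rightarrow> real" where
  "Phi mu0 u s t = (\<Sum>\<omega>\<in>UNIV. \<Sum>m\<in>UNIV. \<Sum>a\<in>UNIV. pmf mu0 \<omega> * s$(\<omega>,m) * t$(m,a) * u a \<omega>)"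

lemma U_Phi: "U mu0 u \<sigma> \<rho> = Phi mu0 u (vs \<sigma>) (vr \<rho>)"
  unfolding U_def Phi_def vs_def vr_def by simp

lemma Phi_tendsto:
  assumes "(S \<longlongrightarrow> s) F" "(T \<longlongrightarrow> t) F"
  shows "((\<lambda>n. Phi mu0 u (S n) (T n)) \<longlongrightarrow> Phi mu0 u s t) F"
  unfolding Phi_def by (intro tendsto_intros assms)

lemma norm_vec_le: "(\<forall>i. \<bar>x$i\<bar> \<le> 1) \<Longrightarrow> norm (x::real^'n::finite) \<le> CARD('n)"
proof -
  assume h: "\<forall>i. \<bar>x$i\<bar> \<le> 1"
  have "norm x \<le> (\<Sum>i\<in>UNIV. \<bar>x$i\<bar>)" by (rule norm_le_l1_cart)
  also have "\<dots> \<le> (\<Sum>i\<in>(UNIV::'n set). 1)" using h by (intro sum_mono) auto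
  finally show ?thesis by simp
qed

lemma attain:
  fixes mu0 :: "'w::finite pmf" and uS uR :: "'a::finite \<Rightarrow> 'w \<Rightarrow> real"
  assumes uS_range: "\<forall>a \<omega>. 0 \<le> uS a \<omega> \<and> uS a \<omega> \<le> 1"
  shows "\<exists>(\<sigma>::'w \<Rightarrow> 'm::finite pmf) \<rho>. cheap_talk_eq mu0 uS uR \<sigma> \<rho> \<and>
     U mu0 uS \<sigma> \<rho> = Sup {U mu0 uS \<sigma> \<rho> | (\<sigma>::'w \<Rightarrow> 'm pmf) \<rho>. cheap_talk_eq mu0 uS uR \<sigma> \<rho>}"
proof -
  define E where "E = {U mu0 uS \<sigma> \<rho> | (\<sigma>::'w \<Rightarrow> 'm pmf) \<rho>. cheap_talk_eq mu0 uS uR \<sigma> \<rho>}"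
  have Ene: "E \<noteq> {}" unfolding E_def using babbling[of mu0 uS uR] by blast
  have Ebdd: "bdd_above E" unfolding E_def bdd_above_def
    using U_le1[of uS] uS_range by (intro exI[of _ 1]) auto
  have "\<forall>n::nat. \<exists>p::('w \<Rightarrow> 'm pmf) \<times> ('m \<Rightarrow> 'a pmf). cheap_talk_eq mu0 uS uR (fst p) (snd p) \<and>
      Sup E - inverse (real (Suc n)) < U mu0 uS (fst p) (snd p)"
  proof
    fix n :: nat
    have "Sup E - inverse (real (Suc n)) < Sup E" by simp
    then obtain x where "x \<in> E" "Sup E - inverse (real (Suc n)) < x"
      using less_cSup_iff[OF Ene Ebdd] by blast
    then obtain \<sigma> :: "'w \<Rightarrow> 'm pmf" and \<rho> :: "'m \<Rightarrow> 'a pmf" where "cheap_talk_eq mu0 uS uR \<sigma> \<rho>" "x = U mu0 uS \<sigma> \<rho>" unfolding E_def by blast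
    thus "\<exists>p::('w \<Rightarrow> 'm pmf) \<times> ('m \<Rightarrow> 'a pmf). cheap_talk_eq mu0 uS uR (fst p) (snd p) \<and>
      Sup E - inverse (real (Suc n)) < U mu0 uS (fst p) (snd p)"
      using \<open>Sup E - inverse (real (Suc n)) < x\<close> by (intro exI[of _ "(\<sigma>, \<rho>)"]) simp
  qed
  then obtain sq :: "nat \<Rightarrow> ('w \<Rightarrow> 'm pmf) \<times> ('m \<Rightarrow> 'a pmf)" where
    sqE: "\<And>n. cheap_talk_eq mu0 uS uR (fst (sq n)) (snd (sq n))" and
    sqU: "\<And>n. Sup E - inverse (real (Suc n)) < U mu0 uS (fst (sq n)) (snd (sq n))"
    by metis
  have sqle: "U mu0 uS (fst (sq n)) (snd (sq n)) \<le> Sup E" for n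
    using sqE Ebdd unfolding E_def by (intro cSup_upper) auto
  have Ulim: "(\<lambda>n. U mu0 uS (fst (sq n)) (snd (sq n))) \<longlonglongrightarrow> Sup E"
  proof (rule tendsto_sandwich)
    show "\<forall>\<^sub>F n in sequentially. Sup E - inverse (real (Suc n)) \<le> U mu0 uS (fst (sq n)) (snd (sq n))"
      using sqU by (simp add: less_imp_le)
    show "\<forall>\<^sub>F n in sequentially. U mu0 uS (fst (sq n)) (snd (sq n)) \<le> Sup E" using sqle by simp
    show "(\<lambda>n. Sup E - inverse (real (Suc n))) \<longlonglongrightarrow> Sup E"
      using tendsto_diff[OF tendsto_const LIMSEQ_inverse_real_of_nat, of "Sup E"] by simp
  qed simp
  define f where "f n = (vs (fst (sq n)), vr (snd (sq n)))" for n
  have "bounded (range f)"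
    unfolding bounded_iff
  proof (intro exI ballI)
    fix z assume "z \<in> range f"
    then obtain n where z: "z = f n" by blast
    have "norm (vs (fst (sq n))) \<le> CARD('w \<times> 'm)"
      by (rule norm_vec_le) (simp add: vs_def pmf_le_1)
    moreover have "norm (vr (snd (sq n))) \<le> CARD('m \<times> 'a)"
      by (rule norm_vec_le) (simp add: vr_def pmf_le_1)
    ultimately show "norm z \<le> real CARD('w \<times> 'm) + real CARD('m \<times> 'a)"
      unfolding z f_def using norm_Pair_le[of "vs (fst (sq n))" "vr (snd (sq n))"] by linarith
  qed
  then obtain l r where r: "strict_mono (r::nat \<Rightarrow> nat)" and lim: "(f \<circ> r) \<longlonglongrightarrow> l"
    using bounded_imp_convergent_subsequence by blast
  define s where "s = fst l"
  define t where "t = snd l"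
  have Slim: "(\<lambda>n. vs (fst (sq (r n)))) \<longlonglongrightarrow> s"
    using tendsto_fst[OF lim] unfolding s_def f_def o_def by simp
  have Tlim: "(\<lambda>n. vr (snd (sq (r n)))) \<longlonglongrightarrow> t"
    using tendsto_snd[OF lim] unfolding t_def f_def o_def by simp
  have s_nn: "0 \<le> s$p" for p
    by (rule LIMSEQ_le_const[OF tendsto_vec_nth[OF Slim]]) (simp add: vs_def)
  have t_nn: "0 \<le> t$p" for p
    by (rule LIMSEQ_le_const[OF tendsto_vec_nth[OF Tlim]]) (simp add: vr_def)
  have s_sum: "(\<Sum>m\<in>UNIV. s$(\<omega>,m)) = 1" for \<omega>
  proof -
    have "(\<lambda>n. \<Sum>m\<in>UNIV. vs (fst (sq (r n)))$(\<omega>,m)) \<longlonglongrightarrow> (\<Sum>m\<in>UNIV. s$(\<omega>,m))"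
      by (intro tendsto_intros Slim)
    moreover have "(\<lambda>n. \<Sum>m\<in>UNIV. vs (fst (sq (r n)))$(\<omega>,m)) = (\<lambda>n. 1)"
      by (simp add: vs_def sum_pmf1)
    ultimately show ?thesis using LIMSEQ_unique tendsto_const by metis
  qed
  have t_sum: "(\<Sum>a\<in>UNIV. t$(m,a)) = 1" for m
  proof -
    have "(\<lambda>n. \<Sum>a\<in>UNIV. vr (snd (sq (r n)))$(m,a)) \<longlonglongrightarrow> (\<Sum>a\<in>UNIV. t$(m,a))"
      by (intro tendsto_intros Tlim)
    moreover have "(\<lambda>n. \<Sum>a\<in>UNIV. vr (snd (sq (r n)))$(m,a)) = (\<lambda>n. 1)"
      by (simp add: vr_def sum_pmf1)
    ultimately show ?thesis using LIMSEQ_unique tendsto_const by metis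
  qed
  define \<sigma>s :: "'w \<Rightarrow> 'm pmf" where "\<sigma>s \<omega> = embed_pmf (\<lambda>m. s$(\<omega>,m))" for \<omega>
  define \<rho>s :: "'m \<Rightarrow> 'a pmf" where "\<rho>s m = embed_pmf (\<lambda>a. t$(m,a))" for m
  have vs_s: "vs \<sigma>s = s"
    unfolding vs_def \<sigma>s_def vec_eq_iff
    using pmf_embed_finite[of "\<lambda>m. s$(_,m)"] s_nn s_sum by auto
  have vr_t: "vr \<rho>s = t"
    unfolding vr_def \<rho>s_def vec_eq_iff
    using pmf_embed_finite[of "\<lambda>a. t$(_,a)"] t_nn t_sum by auto
  have Ustar: "U mu0 u \<sigma>s \<rho>s = Phi mu0 u s t" for u unfolding U_Phi vs_s vr_t ..
  have SBR: "S_BR mu0 uS \<sigma>s \<rho>s" unfolding S_BR_def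
  proof
    fix \<sigma>' :: "'w \<Rightarrow> 'm pmf"
    have "Phi mu0 uS (vs \<sigma>') t \<le> Phi mu0 uS s t"
    proof (rule LIMSEQ_le)
      show "(\<lambda>n. Phi mu0 uS (vs \<sigma>') (vr (snd (sq (r n))))) \<longlonglongrightarrow> Phi mu0 uS (vs \<sigma>') t"
        by (rule Phi_tendsto[OF tendsto_const Tlim])
      show "(\<lambda>n. Phi mu0 uS (vs (fst (sq (r n)))) (vr (snd (sq (r n))))) \<longlonglongrightarrow> Phi mu0 uS s t"
        by (rule Phi_tendsto[OF Slim Tlim])
      show "\<exists>N. \<forall>n\<ge>N. Phi mu0 uS (vs \<sigma>') (vr (snd (sq (r n)))) \<le> Phi mu0 uS (vs (fst (sq (r n)))) (vr (snd (sq (r n))))"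
        using sqE unfolding cheap_talk_eq_def S_BR_def U_Phi by blast
    qed
    thus "U mu0 uS \<sigma>' \<rho>s \<le> U mu0 uS \<sigma>s \<rho>s" unfolding U_Phi vs_s vr_t .
  qed
  have RBR: "R_BR mu0 uR \<sigma>s \<rho>s" unfolding R_BR_def
  proof
    fix \<rho>' :: "'m \<Rightarrow> 'a pmf"
    have "Phi mu0 uR s (vr \<rho>') \<le> Phi mu0 uR s t"
    proof (rule LIMSEQ_le)
      show "(\<lambda>n. Phi mu0 uR (vs (fst (sq (r n)))) (vr \<rho>')) \<longlonglongrightarrow> Phi mu0 uR s (vr \<rho>')"
        by (rule Phi_tendsto[OF Slim tendsto_const])
      show "(\<lambda>n. Phi mu0 uR (vs (fst (sq (r n)))) (vr (snd (sq (r n))))) \<longlonglongrightarrow> Phi mu0 uR s t"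
        by (rule Phi_tendsto[OF Slim Tlim])
      show "\<exists>N. \<forall>n\<ge>N. Phi mu0 uR (vs (fst (sq (r n)))) (vr \<rho>') \<le> Phi mu0 uR (vs (fst (sq (r n)))) (vr (snd (sq (r n))))"
        using sqE unfolding cheap_talk_eq_def R_BR_def U_Phi by blast
    qed
    thus "U mu0 uR \<sigma>s \<rho>' \<le> U mu0 uR \<sigma>s \<rho>s" unfolding U_Phi vs_s vr_t .
  qed
  have "(\<lambda>n. Phi mu0 uS (vs (fst (sq (r n)))) (vr (snd (sq (r n))))) \<longlonglongrightarrow> Phi mu0 uS s t"
    by (rule Phi_tendsto[OF Slim Tlim])
  moreover have "(\<lambda>n. Phi mu0 uS (vs (fst (sq (r n)))) (vr (snd (sq (r n))))) \<longlonglongrightarrow> Sup E"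
    using LIMSEQ_subseq_LIMSEQ[OF Ulim r] unfolding o_def U_Phi .
  ultimately have "Phi mu0 uS s t = Sup E" by (rule LIMSEQ_unique)
  hence "U mu0 uS \<sigma>s \<rho>s = Sup E" unfolding Ustar .
  thus ?thesis using SBR RBR unfolding cheap_talk_eq_def E_def by blast
qed


theorem proposition1:
  fixes mu0 :: "'w::finite pmf"
    and uS uR :: "'a::finite \<Rightarrow> 'w \<Rightarrow> real"
  assumes prior_pos: "\<forall>\<omega>. pmf mu0 \<omega> > 0"
    and M_big: "CARD('m::finite) > max CARD('w) CARD('a)"
    and uS_range: "\<forall>a \<omega>. 0 \<le> uS a \<omega> \<and> uS a \<omega> \<le> 1"
    and uR_range: "\<forall>a \<omega>. 0 \<le> uR a \<omega> \<and> uR a \<omega> \<le> 1"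
    and scant: "scant_indifferences uS uR"
    and no_value: "cheap_talk_payoff mu0 uS uR TYPE('m) = persuasion_payoff mu0 uS uR TYPE('m)"
  shows "\<exists>(\<sigma> :: 'w \<Rightarrow> 'm pmf) (\<rho> :: 'm \<Rightarrow> 'a pmf).
           partitional \<sigma> \<and> pure_strategy \<rho> \<and> cheap_talk_eq mu0 uS uR \<sigma> \<rho> \<and>
           U mu0 uS \<sigma> \<rho> = persuasion_payoff mu0 uS uR TYPE('m) \<and>
           card (used_messages \<sigma>) \<le> CARD('a)"
proof -
  have card: "CARD('a) \<le> CARD('m)" using M_big by simp
  obtain \<sigma> :: "'w \<Rightarrow> 'm pmf" and \<rho> :: "'m \<Rightarrow> 'a pmf" where E: "cheap_talk_eq mu0 uS uR \<sigma> \<rho>"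
    and UE: "U mu0 uS \<sigma> \<rho> = Sup {U mu0 uS \<sigma> \<rho> | (\<sigma>::'w \<Rightarrow> 'm pmf) \<rho>. cheap_talk_eq mu0 uS uR \<sigma> \<rho>}"
    using attain[OF uS_range] by blast
  have ct: "cheap_talk_payoff mu0 uS uR TYPE('m) = Sup {U mu0 uS \<sigma> \<rho> | (\<sigma>::'w \<Rightarrow> 'm pmf) \<rho>. cheap_talk_eq mu0 uS uR \<sigma> \<rho>}"
    by (simp add: cheap_talk_payoff_def)
  have pp: "persuasion_payoff mu0 uS uR TYPE('m) = Sup {U mu0 uS \<sigma> \<rho> | (\<sigma>::'w \<Rightarrow> 'm pmf) \<rho>. R_BR mu0 uR \<sigma> \<rho>}"
    by (simp add: persuasion_payoff_def)
  have Upp: "U mu0 uS \<sigma> \<rho> = persuasion_payoff mu0 uS uR TYPE('m)"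
    using UE ct no_value by simp
  have opt: "\<forall>(\<sigma>'::'w \<Rightarrow> 'm pmf) \<rho>'. R_BR mu0 uR \<sigma>' \<rho>' \<longrightarrow> U mu0 uS \<sigma>' \<rho>' \<le> U mu0 uS \<sigma> \<rho>"
  proof (intro allI impI)
    fix \<sigma>' :: "'w \<Rightarrow> 'm pmf" and \<rho>' :: "'m \<Rightarrow> 'a pmf"
    assume "R_BR mu0 uR \<sigma>' \<rho>'"
    moreover have "bdd_above {U mu0 uS \<sigma> \<rho> | (\<sigma>::'w \<Rightarrow> 'm pmf) \<rho>. R_BR mu0 uR \<sigma> \<rho>}"
      unfolding bdd_above_def using U_le1[of uS] uS_range by (intro exI[of _ 1]) auto
    ultimately have "U mu0 uS \<sigma>' \<rho>' \<le> Sup {U mu0 uS \<sigma> \<rho> | (\<sigma>::'w \<Rightarrow> 'm pmf) \<rho>. R_BR mu0 uR \<sigma> \<rho>}"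
      by (intro cSup_upper) auto
    thus "U mu0 uS \<sigma>' \<rho>' \<le> U mu0 uS \<sigma> \<rho>" using pp Upp by simp
  qed
  obtain \<sigma>h :: "'w \<Rightarrow> 'm pmf" and \<rho>h :: "'m \<Rightarrow> 'a pmf" where
    h: "partitional \<sigma>h" "pure_strategy \<rho>h" "cheap_talk_eq mu0 uS uR \<sigma>h \<rho>h"
       "U mu0 uS \<sigma>h \<rho>h = U mu0 uS \<sigma> \<rho>" "card (used_messages \<sigma>h) \<le> CARD('a)"
    using final_from_opt[OF prior_pos card scant E opt] by blast
  show ?thesis using h Upp by metis
qed

end
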